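(* Let $\Lambda=\{ab^ic\mid i\geq 1\}$. The submonoid of $\Pi_2=\langle a,b,c\mid (ab^ic)^2=1\ (i\geq 1)\rangle$ generated by the elements represented by the words of $\Lambda$ is equal to the group of units $U(\Pi_2)$.
   Context: The group of units $U(M)$ of a monoid $M$ is the set of elements having both a left and a right inverse. *)

theory Defs
  imports "HOL-Algebra.Group"
begin

datatype gen = Ga | Gb | Gc

definition lam_word :: "nat \<Rightarrow> gen list" where
  "lam_word i = [Ga] @ replicate i Gb @ [Gc]"

definition Lambda :: "gen list set" where
  "Lambda = {lam_word i | i. i \<ge> 1}"

definition pi2_rels :: "(gen list \<times> gen list) set" where
  "pi2_rels = {(lam_word i @ lam_word i, []) | i. i \<ge> 1}"

definition pi2_step :: "(gen list \<times> gen list) set" where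
  "pi2_step = {(u @ l @ v, u @ r @ v) | u l r v. (l, r) \<in> pi2_rels}"

definition pi2_cong :: "(gen list \<times> gen list) set" where
  "pi2_cong = (pi2_step \<union> pi2_step\<inverse>)\<^sup>*"

definition cls :: "gen list \<Rightarrow> gen list set" where
  "cls w = pi2_cong `` {w}"

definition Pi2 :: "gen list set monoid" where
  "Pi2 = \<lparr>carrier = UNIV // pi2_cong,
          mult = (\<lambda>X Y. cls ((SOME x. x \<in> X) @ (SOME y. y \<in> Y))),
          one = cls []\<rparr>"

definition gen_submonoid :: "('a, 'b) monoid_scheme \<Rightarrow> 'a set \<Rightarrow> 'a set" where
  "gen_submonoid M S = \<Inter>{H. submonoid H M \<and> S \<subseteq> H}"

end

theory Submission
  imports Defs
begin

definition rr :: "nat \<Rightarrow> gen list" where "rr i = lam_word i @ lam_word i"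

definition irred :: "gen list \<Rightarrow> bool" where
  "irred w = (\<forall>u v i. 1 \<le> i \<longrightarrow> w \<noteq> u @ rr i @ v)"

definition pushw :: "gen list \<Rightarrow> gen \<Rightarrow> gen list" where
  "pushw s x = (if \<exists>u i. 1 \<le> i \<and> s @ [x] = u @ rr i
     then (SOME u. \<exists>i. 1 \<le> i \<and> s @ [x] = u @ rr i) else s @ [x])"

definition Fr :: "gen list \<Rightarrow> gen list \<Rightarrow> gen list" where
  "Fr s w = foldl pushw s w"

lemma lam_uniq: "u @ lam_word i = u' @ lam_word k \<Longrightarrow> i = k"
proof (rule ccontr)
  assume h: "u @ lam_word i = u' @ lam_word k" "i \<noteq> k"
  have r: "rev (lam_word j) = Gc # replicate j Gb @ [Ga]" for j
    by (simp add: lam_word_def)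
  from h(1) have e: "rev (lam_word i) @ rev u = rev (lam_word k) @ rev u'"
    by (metis rev_append)
  show False
  proof (cases "i < k")
    case True
    then have "replicate k Gb = replicate i Gb @ Gb # replicate (k - i - 1) Gb"
      using replicate_add[of i "Suc (k-i-1)" Gb] by simp
    with e show False by (simp add: r)
  next
    case False
    with h(2) have "i > k" by simp
    then have "replicate i Gb = replicate k Gb @ Gb # replicate (i - k - 1) Gb"
      using replicate_add[of k "Suc (i-k-1)" Gb] by simp
    with e show False by (simp add: r)
  qed
qed

lemma rr_uniq: "u @ rr i = u' @ rr k \<Longrightarrow> i = k \<and> u = u'"
proof -
  assume h: "u @ rr i = u' @ rr k"
  then have "(u @ lam_word i) @ lam_word i = (u' @ lam_word k) @ lam_word k"
    by (simp add: rr_def)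
  then have "i = k" using lam_uniq by blast
  with h show ?thesis by simp
qed

lemma push_pop: "s @ [x] = u @ rr i \<Longrightarrow> 1 \<le> i \<Longrightarrow> pushw s x = u"
  unfolding pushw_def
  apply (subst if_P, blast)
  apply (rule some_equality, blast)
  using rr_uniq by metis

lemma push_nopop: "\<not>(\<exists>u i. 1 \<le> i \<and> s @ [x] = u @ rr i) \<Longrightarrow> pushw s x = s @ [x]"
  unfolding pushw_def by (rule if_not_P)

lemma rr_last: "last (rr i) = Gc" by (simp add: rr_def lam_word_def)
lemma rr_ne: "rr i \<noteq> []" by (simp add: rr_def lam_word_def)

lemma push_nc: "x \<noteq> Gc \<Longrightarrow> pushw s x = s @ [x]"
  apply (rule push_nopop)
  apply clarify
proof -
  fix u i assume "x \<noteq> Gc" "s @ [x] = u @ rr i"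
  then have "last (s @ [x]) = last (u @ rr i)" by simp
  then show False using rr_ne rr_last \<open>x \<noteq> Gc\<close> by simp
qed

lemma Fr_append: "Fr s (a @ b) = Fr (Fr s a) b" by (simp add: Fr_def)
lemma Fr_Cons: "Fr s (x # b) = Fr (pushw s x) b" by (simp add: Fr_def)
lemma Fr_Nil: "Fr s [] = s" by (simp add: Fr_def)

lemma Fr_repb: "Fr s (replicate n Gb) = s @ replicate n Gb"
  by (induction n arbitrary: s) (simp_all add: Fr_Nil Fr_Cons push_nc)

lemma Fr_lam: "Fr s (lam_word i) = pushw (s @ Ga # replicate i Gb) Gc"
  by (simp add: lam_word_def Fr_Cons Fr_append Fr_repb push_nc Fr_Nil)

lemma irred_nopop: "irred (s @ [x]) \<Longrightarrow> pushw s x = s @ [x]"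
  by (rule push_nopop) (metis irred_def append_Nil2)

lemma irred_appD: "irred (a @ b) \<Longrightarrow> irred a \<and> irred b"
  unfolding irred_def by (metis append.assoc)

lemma Fr_rr: "irred s \<Longrightarrow> 1 \<le> i \<Longrightarrow> Fr s (rr i) = s"
proof -
  assume s: "irred s" and i: "1 \<le> i"
  have lw: "s @ lam_word i = (s @ Ga # replicate i Gb) @ [Gc]" for s
    by (simp add: lam_word_def)
  show ?thesis
  proof (cases "\<exists>u k. 1 \<le> k \<and> s @ lam_word i = u @ rr k")
    case True
    then obtain u k where k: "1 \<le> k" "s @ lam_word i = u @ rr k" by blast
    then have "(s) @ lam_word i = (u @ lam_word k) @ lam_word k" by (simp add: rr_def)
    then have ik: "i = k" using lam_uniq by blast
    then have su: "s = u @ lam_word i" using k by (simp add: rr_def)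
    have "Fr s (lam_word i) = u" using push_pop[of "s @ Ga # replicate i Gb" Gc u k] k
      by (simp add: Fr_lam lw)
    then have "Fr s (rr i) = Fr u (lam_word i)" by (simp add: rr_def Fr_append)
    also have "\<dots> = pushw (u @ Ga # replicate i Gb) Gc" by (rule Fr_lam)
    also have "\<dots> = s" using irred_nopop[of "u @ Ga # replicate i Gb" Gc] s su
      by (simp add: lam_word_def)
    finally show ?thesis .
  next
    case False
    then have "Fr s (lam_word i) = s @ lam_word i"
      using push_nopop[of "s @ Ga # replicate i Gb" Gc] by (simp add: Fr_lam lw)
    then have "Fr s (rr i) = Fr (s @ lam_word i) (lam_word i)" by (simp add: rr_def Fr_append)
    also have "\<dots> = pushw ((s @ lam_word i) @ Ga # replicate i Gb) Gc" by (rule Fr_lam)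
    also have "\<dots> = s" using push_pop[of "(s @ lam_word i) @ Ga # replicate i Gb" Gc s i] i
      by (simp add: rr_def lam_word_def)
    finally show ?thesis .
  qed
qed

lemma irred_push: "irred s \<Longrightarrow> irred (pushw s x)"
proof (cases "\<exists>u i. 1 \<le> i \<and> s @ [x] = u @ rr i")
  case True
  assume s: "irred s"
  then obtain u i where h: "1 \<le> i" "s @ [x] = u @ rr i" using True by blast
  have "rr i \<noteq> []" by (simp add: rr_def lam_word_def)
  have "butlast (s @ [x]) = butlast (u @ rr i)" using h(2) by simp
  then have "s = u @ butlast (rr i)" using \<open>rr i \<noteq> []\<close> by (simp add: butlast_append)
  then have "irred u" using s irred_appD by blast
  then show ?thesis using push_pop h by simp
next
  case False
  assume s: "irred s"
  have "irred (s @ [x])" unfolding irred_def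
  proof (intro allI impI)
    fix u v i assume i: "1 \<le> (i::nat)"
    show "s @ [x] \<noteq> u @ rr i @ v"
    proof (cases v rule: rev_cases)
      case Nil then show ?thesis using False i by auto
    next
      case (snoc v' y)
      then show ?thesis using s i unfolding irred_def by auto
    qed
  qed
  then show ?thesis using push_nopop False by simp
qed

lemma irred_Nil: "irred []" by (simp add: irred_def rr_def lam_word_def)

lemma irred_Fr: "irred s \<Longrightarrow> irred (Fr s w)"
  by (induction w arbitrary: s) (auto simp: Fr_Nil Fr_Cons irred_push)

lemma step_ctx: "(a,b) \<in> pi2_step \<Longrightarrow> (u@a@v, u@b@v) \<in> pi2_step"
proof -
  assume "(a,b) \<in> pi2_step"
  then obtain ua l r va where h: "a = ua@l@va" "b = ua@r@va" "(l,r) \<in> pi2_rels"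
    unfolding pi2_step_def by blast
  have "(u@a@v, u@b@v) = ((u@ua)@l@(va@v), (u@ua)@r@(va@v))" using h by simp
  then show ?thesis using h(3) unfolding pi2_step_def by blast
qed

lemma cong_ctx: "(a,b) \<in> pi2_cong \<Longrightarrow> (u@a@v, u@b@v) \<in> pi2_cong"
  unfolding pi2_cong_def
proof (induction rule: rtrancl_induct)
  case base then show ?case by simp
next
  case (step b c)
  then have "(u@b@v, u@c@v) \<in> pi2_step \<union> pi2_step\<inverse>" using step_ctx by blast
  then show ?case using step.IH by (rule rtrancl_into_rtrancl[rotated])
qed

lemma cong_equiv: "equiv UNIV pi2_cong"
  unfolding pi2_cong_def
  by (rule equivI) (auto simp: refl_rtrancl trans_rtrancl intro: sym_rtrancl sym_Un_converse)

lemma cong_sym: "(a,b) \<in> pi2_cong \<Longrightarrow> (b,a) \<in> pi2_cong"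
  using cong_equiv by (meson equiv_def symD)
lemma cong_trans: "(a,b) \<in> pi2_cong \<Longrightarrow> (b,c) \<in> pi2_cong \<Longrightarrow> (a,c) \<in> pi2_cong"
  unfolding pi2_cong_def by simp
lemma cong_refl: "(a,a) \<in> pi2_cong"
  unfolding pi2_cong_def by simp

lemma cong_app: "(a,b) \<in> pi2_cong \<Longrightarrow> (c,d) \<in> pi2_cong \<Longrightarrow> (a@c, b@d) \<in> pi2_cong"
  using cong_ctx[of a b "[]" c] cong_ctx[of c d b "[]"] cong_trans by simp

lemma rr_cong: "1 \<le> i \<Longrightarrow> (u @ rr i @ v, u @ v) \<in> pi2_cong"
proof -
  assume "1 \<le> i"
  then have "(rr i, []) \<in> pi2_rels" unfolding pi2_rels_def rr_def by blast
  then have "(u @ rr i @ v, u @ [] @ v) \<in> pi2_step" unfolding pi2_step_def by blast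
  then show ?thesis unfolding pi2_cong_def by auto
qed

lemma push_cong: "(s@[x], pushw s x) \<in> pi2_cong"
proof (cases "\<exists>u i. 1 \<le> i \<and> s @ [x] = u @ rr i")
  case True
  then obtain u i where h: "1 \<le> i" "s @ [x] = u @ rr i" by blast
  then show ?thesis using push_pop[OF h(2,1)] rr_cong[OF h(1), of u "[]"] by simp
next
  case False then show ?thesis using push_nopop cong_refl by simp
qed

lemma Fr_cong: "(s@w, Fr s w) \<in> pi2_cong"
proof (induction w arbitrary: s)
  case Nil then show ?case by (simp add: Fr_Nil cong_refl)
next
  case (Cons x w)
  have "((s@[x])@w, pushw s x @ w) \<in> pi2_cong" by (rule cong_app[OF push_cong cong_refl])
  then show ?case using Cons.IH[of "pushw s x"] cong_trans by (simp add: Fr_Cons)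
qed

lemma step_Fr: "(w,w') \<in> pi2_step \<Longrightarrow> Fr [] w = Fr [] w'"
proof -
  assume "(w,w') \<in> pi2_step"
  then obtain u i v where h: "w = u @ rr i @ v" "w' = u @ v" "1 \<le> i"
    unfolding pi2_step_def pi2_rels_def rr_def by auto
  have "irred (Fr [] u)" by (rule irred_Fr[OF irred_Nil])
  then show ?thesis using h by (simp add: Fr_append Fr_rr)
qed

lemma cong_Fr: "(w,w') \<in> pi2_cong \<Longrightarrow> Fr [] w = Fr [] w'"
  unfolding pi2_cong_def
proof (induction rule: rtrancl_induct)
  case base then show ?case by simp
next
  case (step b c) then show ?case using step_Fr by auto
qed

lemma core:
  assumes "irred s" "irred t"
  shows "\<exists>s' m. (\<exists>z. s = s'@z) \<and> m \<le> length t \<and> Fr s t = s' @ drop m t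
     \<and> (s' \<noteq> [] \<or> s = [] \<or> hd s = Ga)
     \<and> (m = 0 \<or> (\<exists>i q p t'. 1\<le>i \<and> q \<noteq> [] \<and> p \<noteq> [] \<and> rr i = p @ q \<and> t = q @ t'))"
  using assms(2)
proof (induction t rule: rev_induct)
  case Nil then show ?case by (rule_tac x=s in exI, rule_tac x=0 in exI) (simp add: Fr_Nil)
next
  case (snoc x t)
  then have "irred t" using irred_appD by blast
  then obtain s' m where IH: "\<exists>z. s = s'@z" "m \<le> length t" "Fr s t = s' @ drop m t"
     "s' \<noteq> [] \<or> s = [] \<or> hd s = Ga"
     "m = 0 \<or> (\<exists>i q p t'. 1\<le>i \<and> q \<noteq> [] \<and> p \<noteq> [] \<and> rr i = p @ q \<and> t = q @ t')"
    using snoc.IH by blast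
  have P5: "m = 0 \<or> (\<exists>i q p t'. 1\<le>i \<and> q \<noteq> [] \<and> p \<noteq> [] \<and> rr i = p @ q \<and> t @ [x] = q @ t')"
    using IH(5) by (metis append.assoc)
  have F: "Fr s (t@[x]) = pushw (s' @ drop m t) x" using IH(3) by (simp add: Fr_append Fr_Cons Fr_Nil)
  show ?case
  proof (cases "\<exists>u i. 1 \<le> i \<and> (s' @ drop m t) @ [x] = u @ rr i")
    case False
    then have "Fr s (t@[x]) = s' @ drop m (t@[x])" using F push_nopop IH(2) by simp
    then show ?thesis using IH P5 by (rule_tac x=s' in exI, rule_tac x=m in exI) auto
  next
    case True
    then obtain u i where h: "1 \<le> i" "s' @ (drop m t @ [x]) = u @ rr i" by auto
    have Fu: "Fr s (t@[x]) = u" using F push_pop h by simp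
    have tx: "t @ [x] = take m t @ (drop m t @ [x])" by simp
    have nocont: "\<And>w. drop m t @ [x] \<noteq> w @ rr i"
    proof
      fix w assume "drop m t @ [x] = w @ rr i"
      then have "t @ [x] = (take m t @ w) @ rr i @ []" using tx by simp
      then show False using snoc.prems h(1) unfolding irred_def by blast
    qed
    from h(2) obtain us where us: "(s' = u@us \<and> us @ (drop m t @ [x]) = rr i) \<or> (s'@us = u \<and> drop m t @ [x] = us @ rr i)"
      by (auto simp: append_eq_append_conv2)
    then have z: "s' = u @ us" "us @ drop m t @ [x] = rr i" using nocont by auto
    have zne: "us \<noteq> []" using z(2) nocont[of "[]"] by auto
    show ?thesis
    proof (rule exI[of _ u], rule exI[of _ "length (t@[x])"], intro conjI)
      show "\<exists>z. s = u @ z" using IH(1) z by auto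
      show "Fr s (t @ [x]) = u @ drop (length (t @ [x])) (t @ [x])" using Fu by simp
      show "u \<noteq> [] \<or> s = [] \<or> hd s = Ga"
      proof (cases "u = []")
        case True
        then have "s' = us" using z by simp
        have "hd (us @ drop m t @ [x]) = hd (rr i)" using z by simp
        then have "hd s' = Ga" using zne \<open>s' = us\<close> by (simp add: rr_def lam_word_def)
        then show ?thesis using IH(1) zne \<open>s' = us\<close> by (auto simp: hd_append)
      qed simp
      show "length (t @ [x]) = 0 \<or> (\<exists>i q p t'. 1 \<le> i \<and> q \<noteq> [] \<and> p \<noteq> [] \<and> rr i = p @ q \<and> t @ [x] = q @ t')"
      proof (cases "m = 0")
        case True
        then show ?thesis using z zne h(1) by (rule_tac disjI2, rule_tac x=i in exI, rule_tac x="t@[x]" in exI, rule_tac x=us in exI) auto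
      next
        case False
        then show ?thesis using P5 by simp
      qed
    qed simp
  qed
qed


lemma core_final:
  assumes "irred s" "irred t" "Fr s t = []"
  shows "(s = [] \<or> hd s = Ga) \<and> (t = [] \<or> (\<exists>i q p t'. 1\<le>i \<and> q \<noteq> [] \<and> p \<noteq> [] \<and> rr i = p @ q \<and> t = q @ t'))"
proof -
  obtain s' m where c: "(\<exists>z. s = s'@z)" "m \<le> length t" "Fr s t = s' @ drop m t"
     "(s' \<noteq> [] \<or> s = [] \<or> hd s = Ga)"
     "(m = 0 \<or> (\<exists>i q p t'. 1\<le>i \<and> q \<noteq> [] \<and> p \<noteq> [] \<and> rr i = p @ q \<and> t = q @ t'))"
    using core[OF assms(1,2)] by blast
  then have "s' = []" "m = length t" using assms(3) by auto
  then show ?thesis using c by auto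
qed

lemma lam_split: "u \<noteq> [] \<Longrightarrow> v \<noteq> [] \<Longrightarrow> u @ v = lam_word i \<Longrightarrow> hd v \<noteq> Ga"
proof -
  assume h: "u \<noteq> []" "v \<noteq> []" "u @ v = lam_word i"
  then obtain u' where "u = Ga # u'" by (cases u) (auto simp: lam_word_def)
  then have "u' @ v = replicate i Gb @ [Gc]" using h by (simp add: lam_word_def)
  then have "hd v \<in> set (replicate i Gb @ [Gc])" using h(2) by (metis Un_iff hd_in_set set_append)
  then show ?thesis by (auto split: if_splits)
qed

lemma hd_piece:
  assumes "rr i = p @ q" "p \<noteq> []" "q \<noteq> []" "hd q = Ga"
  shows "q = lam_word i"
proof -
  from assms(1) obtain us where us: "(lam_word i = p @ us \<and> us @ lam_word i = q) \<or> (lam_word i @ us = p \<and> lam_word i = us @ q)"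
    unfolding rr_def by (auto simp: append_eq_append_conv2)
  then show ?thesis
  proof
    assume a: "lam_word i = p @ us \<and> us @ lam_word i = q"
    show ?thesis
    proof (cases "us = []")
      case True then show ?thesis using a by (metis append_Nil append_Nil2)
    next
      case False
      then have "hd q = hd us" using a by auto
      then show ?thesis using lam_split[of p us i] a False assms by simp
    qed
  next
    assume a: "lam_word i @ us = p \<and> lam_word i = us @ q"
    show ?thesis
    proof (cases "us = []")
      case True then show ?thesis using a by (metis append_Nil append_Nil2)
    next
      case False
      then show ?thesis using lam_split[of us q i] a assms by simp
    qed
  qed
qed

lemma Fr_irred: "irred (s @ w) \<Longrightarrow> Fr s w = s @ w"
proof (induction w arbitrary: s)
  case Nil then show ?case by (simp add: Fr_Nil)
next
  case (Cons x w)
  have "irred (s @ [x])" using Cons.prems irred_appD[of "s@[x]" w] by simp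
  then show ?case using Cons irred_nopop by (simp add: Fr_Cons)
qed

lemma Fr_Nil_irred: "irred x \<Longrightarrow> Fr [] x = x"
  using Fr_irred[of "[]" x] by simp

lemma cong_Nil_Fr: "(w, []) \<in> pi2_cong \<Longrightarrow> Fr [] w = []"
  using cong_Fr[of w "[]"] by (simp add: Fr_Nil)

lemma unit_word:
  assumes x: "irred x" and r: "(x@v, []) \<in> pi2_cong" and l: "(u@x, []) \<in> pi2_cong" and ne: "x \<noteq> []"
  shows "\<exists>i x'. 1 \<le> i \<and> x = lam_word i @ x'"
proof -
  define v' where "v' = Fr [] v"
  have v'i: "irred v'" unfolding v'_def by (rule irred_Fr[OF irred_Nil])
  have "(v, v') \<in> pi2_cong" using Fr_cong[of "[]" v] unfolding v'_def by simp
  then have "(x@v', x@v) \<in> pi2_cong" using cong_app[OF cong_refl] cong_sym by blast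
  then have "(x@v', []) \<in> pi2_cong" using r cong_trans by blast
  then have "Fr [] (x@v') = []" by (rule cong_Nil_Fr)
  then have "Fr x v' = []" using Fr_Nil_irred[OF x] by (simp add: Fr_append)
  then have hx: "hd x = Ga" using core_final[OF x v'i] ne by simp
  define u' where "u' = Fr [] u"
  have u'i: "irred u'" unfolding u'_def by (rule irred_Fr[OF irred_Nil])
  have "(u, u') \<in> pi2_cong" using Fr_cong[of "[]" u] unfolding u'_def by simp
  then have "(u'@x, u@x) \<in> pi2_cong" using cong_app[OF _ cong_refl] cong_sym by blast
  then have "(u'@x, []) \<in> pi2_cong" using l cong_trans by blast
  then have "Fr [] (u'@x) = []" by (rule cong_Nil_Fr)
  then have "Fr u' x = []" using Fr_Nil_irred[OF u'i] by (simp add: Fr_append)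
  then obtain i q p t' where h: "1\<le>i" "q \<noteq> []" "p \<noteq> []" "rr i = p @ q" "x = q @ t'"
    using core_final[OF u'i x] ne by blast
  then have "hd q = Ga" using hx by simp
  then have "q = lam_word i" using hd_piece h by blast
  then show ?thesis using h by blast
qed


lemma cls_eq: "cls a = cls b \<longleftrightarrow> (a,b) \<in> pi2_cong"
  unfolding cls_def by (rule eq_equiv_class_iff[OF cong_equiv]) auto

lemma cls_mem: "x \<in> cls a \<longleftrightarrow> (a,x) \<in> pi2_cong"
  unfolding cls_def by simp

lemma carrier_Pi2: "carrier Pi2 = range cls"
  by (auto simp: Pi2_def quotient_def cls_def)

lemma one_Pi2: "\<one>\<^bsub>Pi2\<^esub> = cls []" by (simp add: Pi2_def)

lemma mult_Pi2: "cls a \<otimes>\<^bsub>Pi2\<^esub> cls b = cls (a@b)"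
proof -
  have "(SOME x. x \<in> cls a) \<in> cls a" by (rule someI[of _ a]) (simp add: cls_mem cong_refl)
  moreover have "(SOME x. x \<in> cls b) \<in> cls b" by (rule someI[of _ b]) (simp add: cls_mem cong_refl)
  ultimately have "(a@b, (SOME x. x \<in> cls a) @ (SOME x. x \<in> cls b)) \<in> pi2_cong"
    by (simp add: cls_mem cong_app)
  then show ?thesis unfolding Pi2_def using cls_eq cong_sym by simp
qed

lemma monoid_Pi2: "monoid Pi2"
proof (rule monoidI)
  show "\<one>\<^bsub>Pi2\<^esub> \<in> carrier Pi2" by (simp add: one_Pi2 carrier_Pi2)
  fix x y z assume a: "x \<in> carrier Pi2" "y \<in> carrier Pi2" "z \<in> carrier Pi2"
  then obtain a b c where "x = cls a" "y = cls b" "z = cls c" by (auto simp: carrier_Pi2)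
  then show "x \<otimes>\<^bsub>Pi2\<^esub> y \<in> carrier Pi2" "x \<otimes>\<^bsub>Pi2\<^esub> y \<otimes>\<^bsub>Pi2\<^esub> z = x \<otimes>\<^bsub>Pi2\<^esub> (y \<otimes>\<^bsub>Pi2\<^esub> z)"
     "\<one>\<^bsub>Pi2\<^esub> \<otimes>\<^bsub>Pi2\<^esub> x = x" "x \<otimes>\<^bsub>Pi2\<^esub> \<one>\<^bsub>Pi2\<^esub> = x"
    by (simp_all add: mult_Pi2 one_Pi2 carrier_Pi2)
qed

lemma lam_unit: "1 \<le> i \<Longrightarrow> cls (lam_word i) \<otimes>\<^bsub>Pi2\<^esub> cls (lam_word i) = \<one>\<^bsub>Pi2\<^esub>"
  using rr_cong[of i "[]" "[]"] by (simp add: mult_Pi2 one_Pi2 cls_eq rr_def)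

lemma gen_in_H:
  assumes H: "submonoid H Pi2" "cls ` Lambda \<subseteq> H"
  shows "irred x \<Longrightarrow> (x@v,[]) \<in> pi2_cong \<Longrightarrow> (u@x,[]) \<in> pi2_cong \<Longrightarrow> cls x \<in> H"
proof (induction x arbitrary: u v rule: length_induct)
  case (1 x)
  show ?case
  proof (cases "x = []")
    case True
    then show ?thesis using submonoid.one_closed[OF H(1)] by (simp add: one_Pi2)
  next
    case False
    then obtain i x' where ix: "1 \<le> i" "x = lam_word i @ x'" using unit_word 1 by blast
    have lH: "cls (lam_word i) \<in> H" using H(2) ix(1) unfolding Lambda_def by blast
    have irx: "irred x'" using 1(2) ix irred_appD by blast
    have len: "length x' < length x" using ix by (simp add: lam_word_def)
    have l': "((u @ lam_word i) @ x', []) \<in> pi2_cong" using 1(4) ix by simp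
    have "(x' @ v @ lam_word i, [] @ rr i @ (x' @ v @ lam_word i)) \<in> pi2_cong"
      using rr_cong[OF ix(1), of "[]" "x' @ v @ lam_word i"] cong_sym by simp
    moreover have "([] @ rr i @ (x' @ v @ lam_word i), lam_word i @ (x@v) @ lam_word i) \<in> pi2_cong"
      using ix by (simp add: rr_def cong_refl)
    moreover have "(lam_word i @ (x@v) @ lam_word i, lam_word i @ [] @ lam_word i) \<in> pi2_cong"
      using cong_ctx[OF 1(3)] by blast
    moreover have "(lam_word i @ [] @ lam_word i, []) \<in> pi2_cong"
      using rr_cong[OF ix(1), of "[]" "[]"] by (simp add: rr_def)
    ultimately have r': "(x' @ (v @ lam_word i), []) \<in> pi2_cong" using cong_trans by (metis append.assoc)
    have "cls x' \<in> H" using 1(1) len irx r' l' by blast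
    then have "cls (lam_word i) \<otimes>\<^bsub>Pi2\<^esub> cls x' \<in> H" using lH submonoid.m_closed[OF H(1)] by blast
    then show ?thesis using ix by (simp add: mult_Pi2)
  qed
qed

theorem mainTheorem8:
  shows "gen_submonoid Pi2 (cls ` Lambda) = Units Pi2"
proof
  interpret M: monoid Pi2 by (rule monoid_Pi2)
  have "submonoid (Units Pi2) Pi2"
    by (rule submonoid.intro) auto
  moreover have "cls ` Lambda \<subseteq> Units Pi2"
  proof
    fix X assume "X \<in> cls ` Lambda"
    then obtain i where i: "1 \<le> i" "X = cls (lam_word i)" unfolding Lambda_def by blast
    have "X \<in> carrier Pi2" using i by (simp add: carrier_Pi2)
    then show "X \<in> Units Pi2" unfolding Units_def using lam_unit[OF i(1)] i(2) by blast
  qed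
  ultimately show "gen_submonoid Pi2 (cls ` Lambda) \<subseteq> Units Pi2"
    unfolding gen_submonoid_def by blast
next
  show "Units Pi2 \<subseteq> gen_submonoid Pi2 (cls ` Lambda)"
  proof
    fix X assume X: "X \<in> Units Pi2"
    then obtain Y where Y: "X \<in> carrier Pi2" "Y \<in> carrier Pi2" "Y \<otimes>\<^bsub>Pi2\<^esub> X = \<one>\<^bsub>Pi2\<^esub>" "X \<otimes>\<^bsub>Pi2\<^esub> Y = \<one>\<^bsub>Pi2\<^esub>"
      unfolding Units_def by blast
    then obtain w y where wy: "X = cls w" "Y = cls y" by (auto simp: carrier_Pi2)
    have e1: "(w@y, []) \<in> pi2_cong" using Y(4) wy by (simp add: mult_Pi2 one_Pi2 cls_eq)
    have e2: "(y@w, []) \<in> pi2_cong" using Y(3) wy by (simp add: mult_Pi2 one_Pi2 cls_eq)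
    define x where "x = Fr [] w"
    have wx: "(w, x) \<in> pi2_cong" using Fr_cong[of "[]" w] unfolding x_def by simp
    have irx: "irred x" unfolding x_def by (rule irred_Fr[OF irred_Nil])
    have r: "(x@y, []) \<in> pi2_cong" using cong_app[OF cong_sym[OF wx] cong_refl[of y]] e1 cong_trans by blast
    have l: "(y@x, []) \<in> pi2_cong" using cong_app[OF cong_refl[of y] cong_sym[OF wx]] e2 cong_trans by blast
    have Xx: "X = cls x" using wx wy cls_eq by simp
    show "X \<in> gen_submonoid Pi2 (cls ` Lambda)"
      unfolding gen_submonoid_def using gen_in_H irx r l Xx by blast
  qed
qed

end
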